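(* Let $m,n$ be integers with $0\le m<n$, let $M,N\subseteq\mathbb Z$ be finite nonempty sets, and let $U=b^m a^M$, $V=b^n a^N$ and $S=U\cup V\subseteq BS^{+}(1,3)$. If $|S|\geq 4$, then $|S^2|\geq \tfrac{7}{2}|S|-6$.
   Context: $BS(1,3)=\langle a,b\mid ab=ba^3\rangle$; $BS^{+}(1,3)=\{b^m a^x: m\in\mathbb{Z}_{\ge 0},\ x\in\mathbb{Z}\}$, with $(b^m a^x)(b^n a^y)=b^{m+n}a^{y+3^n x}$. For $A\subseteq\mathbb Z$, $b^m a^A=\{b^m a^x: x\in A\}$. $S^2=\{st: s,t\in S\}$. *)

theory Defs
  imports Complex_Main
begin

text \<open>Elements b^m a^x of the monoid BS^+(1,3) are represented as pairs (m, x)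
 with m a natural number and x an integer.\<close>
type_synonym bsp = "nat \<times> int"

definition bs_mult :: "bsp \<Rightarrow> bsp \<Rightarrow> bsp" where
  "bs_mult s t = (fst s + fst t, snd t + 3 ^ (fst t) * snd s)"

definition bs_layer :: "nat \<Rightarrow> int set \<Rightarrow> bsp set" where
  "bs_layer m A = {(m, x) | x. x \<in> A}"

definition bs_square :: "bsp set \<Rightarrow> bsp set" where
  "bs_square S = {bs_mult s t | s t. s \<in> S \<and> t \<in> S}"

end

theory Submission imports Defs begin

definition ss :: "int set \<Rightarrow> int set \<Rightarrow> int set" where
  "ss A B = {a + b | a b. a \<in> A \<and> b \<in> B}"
definition dil :: "int \<Rightarrow> int set \<Rightarrow> int set" where
  "dil q A = (\<lambda>x. q * x) ` A"
definition aff :: "int \<Rightarrow> int \<Rightarrow> int \<Rightarrow> int" where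
  "aff a q z = a + q * z"

lemma ss_img: "ss A B = (\<lambda>(a,b). a + b) ` (A \<times> B)"
  unfolding ss_def by auto

lemma finite_ss: "finite A \<Longrightarrow> finite B \<Longrightarrow> finite (ss A B)"
  unfolding ss_img by auto

lemma ss_mono: "A \<subseteq> A' \<Longrightarrow> B \<subseteq> B' \<Longrightarrow> ss A B \<subseteq> ss A' B'"
  unfolding ss_def by blast

lemma ss_ne: "A \<noteq> {} \<Longrightarrow> B \<noteq> {} \<Longrightarrow> ss A B \<noteq> {}"
  unfolding ss_def by blast

lemma finite_dil: "finite A \<Longrightarrow> finite (dil q A)" unfolding dil_def by auto
lemma dil_ne: "A \<noteq> {} \<Longrightarrow> dil q A \<noteq> {}" unfolding dil_def by auto
lemma card_dil: "q \<noteq> 0 \<Longrightarrow> card (dil q A) = card A"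
  unfolding dil_def by (rule card_image) (auto simp: inj_on_def)
lemma dil_1[simp]: "dil 1 A = A" unfolding dil_def by auto

lemma card_ss:
  assumes "finite A" "A \<noteq> {}" "finite B" "B \<noteq> {}"
  shows "card A + card B \<le> card (ss A B) + 1"
proof -
  define a where "a = Min A"
  define b where "b = Max B"
  have a: "a \<in> A" "\<And>x. x \<in> A \<Longrightarrow> a \<le> x" using assms a_def by auto
  have b: "b \<in> B" "\<And>x. x \<in> B \<Longrightarrow> x \<le> b" using assms b_def by auto
  let ?X = "(\<lambda>x. x + b) ` A" and ?Y = "(\<lambda>y. a + y) ` B"
  have sub: "?X \<union> ?Y \<subseteq> ss A B" using a b unfolding ss_def by blast
  have int: "?X \<inter> ?Y \<subseteq> {a + b}"
  proof
    fix z assume "z \<in> ?X \<inter> ?Y"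
    then obtain x y where "x \<in> A" "y \<in> B" "z = x + b" "z = a + y" by auto
    with a(2)[of x] b(2)[of y] show "z \<in> {a+b}" by auto
  qed
  have cX: "card ?X = card A" by (rule card_image) (auto simp: inj_on_def)
  have cY: "card ?Y = card B" by (rule card_image) (auto simp: inj_on_def)
  have "card (?X \<union> ?Y) + card (?X \<inter> ?Y) = card ?X + card ?Y"
    using card_Un_Int[of ?X ?Y] assms by auto
  moreover have "card (?X \<inter> ?Y) \<le> 1"
    using card_mono[OF _ int] by simp
  moreover have "card (?X \<union> ?Y) \<le> card (ss A B)"
    by (rule card_mono[OF finite_ss sub]) (use assms in auto)
  ultimately show ?thesis using cX cY by linarith
qed

lemma ss_aff: "ss (aff a q ` X) (aff b q ` Y) = aff (a+b) q ` ss X Y"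
proof
  show "ss (aff a q ` X) (aff b q ` Y) \<subseteq> aff (a+b) q ` ss X Y"
  proof
    fix z assume "z \<in> ss (aff a q ` X) (aff b q ` Y)"
    then obtain x y where xy: "x \<in> X" "y \<in> Y" "z = aff a q x + aff b q y" unfolding ss_def by blast
    then have "z = aff (a+b) q (x + y)" unfolding aff_def by (simp add: algebra_simps)
    moreover have "x + y \<in> ss X Y" using xy unfolding ss_def by blast
    ultimately show "z \<in> aff (a+b) q ` ss X Y" by blast
  qed
  show "aff (a+b) q ` ss X Y \<subseteq> ss (aff a q ` X) (aff b q ` Y)"
  proof
    fix z assume "z \<in> aff (a+b) q ` ss X Y"
    then obtain x y where xy: "x \<in> X" "y \<in> Y" "z = aff (a+b) q (x + y)" unfolding ss_def by blast
    then have "z = aff a q x + aff b q y" unfolding aff_def by (simp add: algebra_simps)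
    then show "z \<in> ss (aff a q ` X) (aff b q ` Y)" using xy unfolding ss_def by blast
  qed
qed

lemma dil_aff: "dil q (aff a q ` X) = aff (q*a) q ` dil q X"
  unfolding dil_def aff_def by (auto simp: algebra_simps image_image)

lemma card_aff: "q \<noteq> 0 \<Longrightarrow> card (aff a q ` X) = card X"
  by (rule card_image) (auto simp: inj_on_def aff_def)

lemma card_le1_MaxMin:
  assumes "finite A" "A \<noteq> {}" "card A \<ge> 2" shows "Min A < Max A"
proof (rule ccontr)
  assume "\<not> Min A < Max A"
  then have "A \<subseteq> {Min A}"
  proof (intro subsetI)
    fix x assume h: "\<not> Min A < Max A" and x: "x \<in> A"
    have "Min A \<le> x" "x \<le> Max A" using x assms by auto
    then show "x \<in> {Min A}" using h by simp
  qed
  then have "card A \<le> card {Min A}" by (rule card_mono[rotated]) simp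
  then have "card A \<le> 1" by simp
  with assms show False by simp
qed

lemma shrink:
  fixes q c :: int
  assumes "q \<ge> 2" "finite A" "A \<noteq> {}" "\<forall>x\<in>A. q dvd (x - c)"
  shows "\<exists>A'. finite A' \<and> A' \<noteq> {} \<and> A = aff c q ` A' \<and>
     nat (Max A' - Min A') \<le> nat (Max A - Min A) \<and>
     (card A \<ge> 2 \<longrightarrow> nat (Max A' - Min A') < nat (Max A - Min A))"
proof -
  define h where "h x = (x - c) div q" for x
  have hx: "aff c q (h x) = x" if "x \<in> A" for x
    using assms(4) that unfolding aff_def h_def by auto
  have A: "A = aff c q ` h ` A"
    using hx by (force simp: image_image)
  have mono: "mono h" unfolding h_def mono_def using assms(1)
    by (auto intro: zdiv_mono1)
  have Mx: "h (Max A) = Max (h ` A)" by (rule mono_Max_commute[OF mono assms(2,3)])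
  have Mn: "h (Min A) = Min (h ` A)" by (rule mono_Min_commute[OF mono assms(2,3)])
  have "Max A - Min A = q * (h (Max A) - h (Min A))"
    using hx[of "Max A"] hx[of "Min A"] assms(2,3) unfolding aff_def
    by (simp add: algebra_simps)
  moreover have "h (Min A) \<le> h (Max A)" using mono assms by (simp add: monoD)
  moreover have "card A \<ge> 2 \<Longrightarrow> Min A < Max A" using card_le1_MaxMin assms by auto
  ultimately have e: "Max A - Min A = q * (Max (h ` A) - Min (h ` A))"
    and nn: "0 \<le> Max (h ` A) - Min (h ` A)"
    and st: "card A \<ge> 2 \<Longrightarrow> 0 < q * (Max (h ` A) - Min (h ` A))"
    using Mx Mn by auto
  define D where "D = Max (h ` A) - Min (h ` A)"
  have le: "D \<le> q * D"
  proof -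
    have "1 * D \<le> q * D" by (rule mult_right_mono) (use nn assms(1) D_def in auto)
    then show ?thesis by simp
  qed
  have lt: "card A \<ge> 2 \<Longrightarrow> D < q * D"
  proof -
    assume "card A \<ge> 2"
    then have "0 < q * D" using st D_def by simp
    then have "0 < D" using assms(1) by (simp add: zero_less_mult_iff)
    then show "D < q * D" using assms(1) by simp
  qed
  show ?thesis
    apply (rule exI[of _ "h ` A"])
    using assms(2,3) A le lt nn unfolding e D_def[symmetric] by auto
qed


lemma disj_mod:
  fixes q :: int
  assumes "\<forall>y\<in>B1. y mod q = r" "\<forall>y\<in>B2. y mod q \<noteq> r"
  shows "ss B1 (dil q X) \<inter> ss B2 (dil q Y) = {}"
proof (rule ccontr)
  assume "ss B1 (dil q X) \<inter> ss B2 (dil q Y) \<noteq> {}"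
  then obtain z where z: "z \<in> ss B1 (dil q X)" "z \<in> ss B2 (dil q Y)" by blast
  obtain y x where 1: "y \<in> B1" "z = y + q * x" using z(1) unfolding ss_def dil_def by blast
  obtain y' x' where 2: "y' \<in> B2" "z = y' + q * x'" using z(2) unfolding ss_def dil_def by blast
  have "z mod q = y mod q" using 1 by simp
  moreover have "z mod q = y' mod q" using 2 by simp
  ultimately show False using 1 2 assms by auto
qed

lemma card_split: "finite A \<Longrightarrow> B \<subseteq> A \<Longrightarrow> card B + card (A - B) = card A"
  using card_Diff_subset[of B A] card_mono[of A B] by (simp add: finite_subset)

lemma mod_class_ss: "(y + q * x) mod q = y mod (q::int)" by simp

lemma L2_aux:
  fixes q :: int assumes q: "q \<ge> 2"
  shows "\<forall>A. nat (Max A - Min A) = d \<longrightarrow> finite A \<longrightarrow> A \<noteq> {} \<longrightarrow>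
     3 * card A \<le> card (ss A (dil q A)) + 2"
proof (induction d rule: less_induct)
  case (less d)
  show ?case
  proof (intro allI impI)
    fix A :: "int set" assume d: "nat (Max A - Min A) = d" and fA: "finite A" and ne: "A \<noteq> {}"
    have fin: "finite (ss A (dil q A))" using fA by (simp add: finite_ss finite_dil)
    show "3 * card A \<le> card (ss A (dil q A)) + 2"
    proof (cases "\<exists>y1\<in>A. \<exists>y2\<in>A. y1 mod q \<noteq> y2 mod q")
      case True
      then obtain y1 y2 where y: "y1 \<in> A" "y2 \<in> A" "y1 mod q \<noteq> y2 mod q" by blast
      define A1 where "A1 = {y\<in>A. y mod q = y1 mod q}"
      define A2 where "A2 = A - A1"
      have ne1: "A1 \<noteq> {}" using y A1_def by auto
      have ne2: "A2 \<noteq> {}" using y A1_def A2_def by auto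
      have f1: "finite A1" "finite A2" using fA A1_def A2_def by auto
      have cA: "card A1 + card A2 = card A" unfolding A2_def
        by (rule card_split[OF fA]) (auto simp: A1_def)
      have sub: "ss A1 (dil q A) \<union> ss A2 (dil q A) \<subseteq> ss A (dil q A)"
        by (intro Un_least ss_mono) (auto simp: A1_def A2_def)
      have disj: "ss A1 (dil q A) \<inter> ss A2 (dil q A) = {}"
        by (rule disj_mod[where r="y1 mod q"]) (auto simp: A1_def A2_def)
      have "card (ss A1 (dil q A) \<union> ss A2 (dil q A)) = card (ss A1 (dil q A)) + card (ss A2 (dil q A))"
        by (rule card_Un_disjoint) (use f1 fA disj in \<open>auto simp: finite_ss finite_dil\<close>)
      moreover have "card A1 + card A \<le> card (ss A1 (dil q A)) + 1"
        using card_ss[OF f1(1) ne1 finite_dil[OF fA, where q=q] dil_ne[OF ne, where q=q]] card_dil[of q A] q by simp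
      moreover have "card A2 + card A \<le> card (ss A2 (dil q A)) + 1"
        using card_ss[OF f1(2) ne2 finite_dil[OF fA, where q=q] dil_ne[OF ne, where q=q]] card_dil[of q A] q by simp
      moreover have "card (ss A1 (dil q A) \<union> ss A2 (dil q A)) \<le> card (ss A (dil q A))"
        by (rule card_mono[OF fin sub])
      ultimately show ?thesis using cA by linarith
    next
      case False
      show ?thesis
      proof (cases "card A \<ge> 2")
        case False
        then have "card A = 1" using fA ne by (metis One_nat_def card_0_eq not_less_eq_eq Suc_1 le_SucE le_zero_eq)
        moreover have "card (ss A (dil q A)) \<ge> 1" using fin ss_ne[OF ne dil_ne[OF ne]]
          by (simp add: Suc_le_eq card_gt_0_iff)
        ultimately show ?thesis by simp
      next
        case True
        obtain y0 where y0: "y0 \<in> A" using ne by blast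
        have dv: "\<forall>x\<in>A. q dvd (x - y0)" using False y0 by (auto simp: mod_eq_dvd_iff)
        obtain A' where A': "finite A'" "A' \<noteq> {}" "A = aff y0 q ` A'"
          "nat (Max A' - Min A') < nat (Max A - Min A)"
          using shrink[OF q fA ne dv] True by blast
        have IH: "3 * card A' \<le> card (ss A' (dil q A')) + 2"
          using less.IH[of "nat (Max A' - Min A')"] A' d by auto
        have "ss A (dil q A) = aff (y0 + q*y0) q ` ss A' (dil q A')"
          unfolding A'(3) dil_aff ss_aff by simp
        then have "card (ss A (dil q A)) = card (ss A' (dil q A'))" using q by (simp add: card_aff)
        moreover have "card A = card A'" using A'(3) q by (simp add: card_aff)
        ultimately show ?thesis using IH by simp
      qed
    qed
  qed
qed

lemma L2: "(q::int) \<ge> 2 \<Longrightarrow> finite A \<Longrightarrow> A \<noteq> {} \<Longrightarrow> 3 * card A \<le> card (ss A (dil q A)) + 2"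
  using L2_aux by blast


lemma L3_aux:
  fixes q :: int assumes q: "q \<ge> 2"
  shows "\<forall>M N. nat (Max M - Min M) + nat (Max N - Min N) = d \<longrightarrow> finite M \<longrightarrow> M \<noteq> {}
     \<longrightarrow> finite N \<longrightarrow> N \<noteq> {} \<longrightarrow>
     7 * (card M + card N) \<le> 2 * (card (ss M M) + card (ss N (dil q M) \<union> ss M N)
        + card (ss N (dil q N))) + 12"
proof (induction d rule: less_induct)
  case (less d)
  show ?case
  proof (intro allI impI)
    fix M N :: "int set"
    assume d: "nat (Max M - Min M) + nat (Max N - Min N) = d" and fM: "finite M" and neM: "M \<noteq> {}"
      and fN: "finite N" and neN: "N \<noteq> {}"
    define k where "k = card M"
    define l where "l = card N"
    define A where "A = card (ss M M)"
    define T where "T = card (ss N (dil q M) \<union> ss M N)"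
    define C where "C = card (ss N (dil q N))"
    have fT: "finite (ss N (dil q M) \<union> ss M N)" using fM fN by (simp add: finite_ss finite_dil)
    have hA: "2 * k \<le> A + 1" using card_ss[OF fM neM fM neM] k_def A_def by simp
    have hC: "3 * l \<le> C + 2" using L2[OF q fN neN] l_def C_def by simp
    have hT0: "card (ss N (dil q M)) \<le> T" unfolding T_def by (rule card_mono[OF fT]) auto
    have hT1: "l + k \<le> card (ss N (dil q M)) + 1"
      using card_ss[OF fN neN finite_dil[OF fM, where q=q] dil_ne[OF neM, where q=q]] card_dil[of q M] q k_def l_def by simp
    have main: "7 * (k + l) \<le> 2 * (A + T + C) + 12"
    proof (cases "\<exists>y1\<in>N. \<exists>y2\<in>N. y1 mod q \<noteq> y2 mod q")
      case True
      then obtain y1 y2 where y: "y1 \<in> N" "y2 \<in> N" "y1 mod q \<noteq> y2 mod q" by blast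
      define N1 where "N1 = {y\<in>N. y mod q = y1 mod q}"
      define N2 where "N2 = N - N1"
      have ne1: "N1 \<noteq> {}" using y N1_def by auto
      have ne2: "N2 \<noteq> {}" using y N1_def N2_def by auto
      have f1: "finite N1" "finite N2" using fN N1_def N2_def by auto
      have cN: "card N1 + card N2 = l" unfolding N2_def l_def
        by (rule card_split[OF fN]) (auto simp: N1_def)
      have sub: "ss N1 (dil q M) \<union> ss N2 (dil q M) \<subseteq> ss N (dil q M) \<union> ss M N"
        by (intro Un_least le_supI1 ss_mono) (auto simp: N1_def N2_def)
      have disj: "ss N1 (dil q M) \<inter> ss N2 (dil q M) = {}"
        by (rule disj_mod[where r="y1 mod q"]) (auto simp: N1_def N2_def)
      have "card (ss N1 (dil q M) \<union> ss N2 (dil q M)) = card (ss N1 (dil q M)) + card (ss N2 (dil q M))"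
        by (rule card_Un_disjoint) (use f1 fM disj in \<open>auto simp: finite_ss finite_dil\<close>)
      moreover have "card N1 + k \<le> card (ss N1 (dil q M)) + 1"
        using card_ss[OF f1(1) ne1 finite_dil[OF fM, where q=q] dil_ne[OF neM, where q=q]] card_dil[of q M] q k_def by simp
      moreover have "card N2 + k \<le> card (ss N2 (dil q M)) + 1"
        using card_ss[OF f1(2) ne2 finite_dil[OF fM, where q=q] dil_ne[OF neM, where q=q]] card_dil[of q M] q k_def by simp
      moreover have "card (ss N1 (dil q M) \<union> ss N2 (dil q M)) \<le> T"
        unfolding T_def by (rule card_mono[OF fT sub])
      ultimately have hT: "l + 2 * k \<le> T + 2" using cN by linarith
      show ?thesis using hT hA hC unfolding distrib_left by linarith
    next
      case False
      obtain y0 where y0: "y0 \<in> N" using neN by blast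
      have Nc: "\<forall>y\<in>N. y mod q = y0 mod q" using False y0 by blast
      define M0 where "M0 = {x\<in>M. x mod q = 0}"
      define M1 where "M1 = M - M0"
      have fM01: "finite M0" "finite M1" using fM M0_def M1_def by auto
      have cM: "card M0 + card M1 = k" unfolding M1_def k_def
        by (rule card_split[OF fM]) (auto simp: M0_def)
      show ?thesis
      proof (cases "M1 = {}")
        case False
        have sub: "ss N (dil q M) \<union> ss M1 N \<subseteq> ss N (dil q M) \<union> ss M N"
          by (intro Un_mono ss_mono) (auto simp: M1_def)
        have disj: "ss N (dil q M) \<inter> ss M1 N = {}"
        proof (rule ccontr)
          assume "ss N (dil q M) \<inter> ss M1 N \<noteq> {}"
          then obtain z where z: "z \<in> ss N (dil q M)" "z \<in> ss M1 N" by blast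
          obtain y x where 1: "y \<in> N" "z = y + q * x" using z(1) unfolding ss_def dil_def by blast
          obtain x1 y' where 2: "x1 \<in> M1" "y' \<in> N" "z = x1 + y'" using z(2) unfolding ss_def by blast
          have zm: "z mod q = y0 mod q" using 1 Nc by simp
          have "x1 mod q = (z - y') mod q" using 2 by simp
          also have "\<dots> = (z mod q - y' mod q) mod q" by (simp add: mod_diff_eq)
          also have "\<dots> = 0" using zm Nc 2 by simp
          finally show False using 2 M1_def M0_def by auto
        qed
        have "card (ss N (dil q M) \<union> ss M1 N) = card (ss N (dil q M)) + card (ss M1 N)"
          by (rule card_Un_disjoint) (use fM01 fM fN disj in \<open>auto simp: finite_ss finite_dil\<close>)
        moreover have "card M1 + l \<le> card (ss M1 N) + 1"
          using card_ss[OF fM01(2) False fN neN] l_def by simp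
        moreover have "card (ss N (dil q M) \<union> ss M1 N) \<le> T"
          unfolding T_def by (rule card_mono[OF fT sub])
        ultimately have hT: "2 * k + 2 * l \<le> T + card M0 + 2" using hT1 cM by linarith
        show ?thesis
        proof (cases "M0 = {}")
          case True
          then have "card M0 = 0" by simp
          then show ?thesis using hT hA hC cM unfolding distrib_left by linarith
        next
          case ne0: False
          have sub2: "ss M0 M0 \<union> ss M0 M1 \<subseteq> ss M M"
            by (intro Un_least ss_mono) (auto simp: M0_def M1_def)
          have disj2: "ss M0 M0 \<inter> ss M0 M1 = {}"
          proof (rule ccontr)
            assume "ss M0 M0 \<inter> ss M0 M1 \<noteq> {}"
            then obtain z where z: "z \<in> ss M0 M0" "z \<in> ss M0 M1" by blast
            obtain a b where 1: "a \<in> M0" "b \<in> M0" "z = a + b" using z(1) unfolding ss_def by blast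
            obtain c e where 2: "c \<in> M0" "e \<in> M1" "z = c + e" using z(2) unfolding ss_def by blast
            have "z mod q = (a mod q + b mod q) mod q" using 1 by (simp add: mod_add_eq)
            also have "\<dots> = 0" using 1 M0_def by simp
            finally have zm: "z mod q = 0" .
            have "e mod q = (z - c) mod q" using 2 by simp
            also have "\<dots> = (z mod q - c mod q) mod q" by (simp add: mod_diff_eq)
            also have "\<dots> = 0" using zm 2 M0_def by simp
            finally show False using 2 M1_def M0_def by auto
          qed
          have "card (ss M0 M0 \<union> ss M0 M1) = card (ss M0 M0) + card (ss M0 M1)"
            by (rule card_Un_disjoint) (use fM01 disj2 in \<open>auto simp: finite_ss\<close>)
          moreover have "card M0 + card M0 \<le> card (ss M0 M0) + 1"
            using card_ss[OF fM01(1) ne0 fM01(1) ne0] by simp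
          moreover have "card M0 + card M1 \<le> card (ss M0 M1) + 1"
            using card_ss[OF fM01(1) ne0 fM01(2) False] by simp
          moreover have "card (ss M0 M0 \<union> ss M0 M1) \<le> A"
            unfolding A_def by (rule card_mono[OF finite_ss[OF fM fM] sub2])
          ultimately have "k + 2 * card M0 \<le> A + 2" using cM by linarith
          then show ?thesis using hT hA hC cM unfolding distrib_left by linarith
        qed
      next
        case True
        show ?thesis
        proof (cases "k \<ge> 2 \<or> l \<ge> 2")
          case False
          then have "k + l \<le> 2" by auto
          then show ?thesis using hA hC hT0 hT1 unfolding distrib_left by linarith
        next
          case True
          have dM: "\<forall>x\<in>M. q dvd (x - 0)" using \<open>M1 = {}\<close> M1_def M0_def by auto
          have dN: "\<forall>y\<in>N. q dvd (y - y0)" using Nc by (auto simp: mod_eq_dvd_iff)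
          obtain M' where M': "finite M'" "M' \<noteq> {}" "M = aff 0 q ` M'"
            "nat (Max M' - Min M') \<le> nat (Max M - Min M)"
            "card M \<ge> 2 \<longrightarrow> nat (Max M' - Min M') < nat (Max M - Min M)"
            using shrink[OF q fM neM dM] by blast
          obtain N' where N': "finite N'" "N' \<noteq> {}" "N = aff y0 q ` N'"
            "nat (Max N' - Min N') \<le> nat (Max N - Min N)"
            "card N \<ge> 2 \<longrightarrow> nat (Max N' - Min N') < nat (Max N - Min N)"
            using shrink[OF q fN neN dN] by blast
          have lt: "nat (Max M' - Min M') + nat (Max N' - Min N') < d"
            using M'(4,5) N'(4,5) True d k_def l_def by linarith
          have IH: "7 * (card M' + card N') \<le> 2 * (card (ss M' M') + card (ss N' (dil q M') \<union> ss M' N')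
            + card (ss N' (dil q N'))) + 12"
            using less.IH[OF lt] M'(1,2) N'(1,2) by blast
          have q0: "q \<noteq> 0" using q by simp
          have e1: "ss M M = aff 0 q ` ss M' M'" unfolding M'(3) ss_aff by simp
          have e2: "ss N (dil q M) \<union> ss M N = aff y0 q ` (ss N' (dil q M') \<union> ss M' N')"
            unfolding M'(3) N'(3) dil_aff ss_aff image_Un by simp
          have e3: "ss N (dil q N) = aff (y0 + q * y0) q ` ss N' (dil q N')"
            unfolding N'(3) dil_aff ss_aff by simp
          have c1: "A = card (ss M' M')" unfolding A_def e1 card_aff[OF q0] ..
          have c2: "T = card (ss N' (dil q M') \<union> ss M' N')" unfolding T_def e2 card_aff[OF q0] ..
          have c3: "C = card (ss N' (dil q N'))" unfolding C_def e3 card_aff[OF q0] ..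
          have c4: "k = card M'" unfolding k_def M'(3) card_aff[OF q0] ..
          have c5: "l = card N'" unfolding l_def N'(3) card_aff[OF q0] ..
          show ?thesis using IH unfolding c1 c2 c3 c4 c5 .
        qed
      qed
    qed
    then show "7 * (card M + card N) \<le> 2 * (card (ss M M) + card (ss N (dil q M) \<union> ss M N)
        + card (ss N (dil q N))) + 12"
      unfolding k_def l_def A_def T_def C_def .
  qed
qed

lemma L3: "(q::int) \<ge> 2 \<Longrightarrow> finite M \<Longrightarrow> M \<noteq> {} \<Longrightarrow> finite N \<Longrightarrow> N \<noteq> {} \<Longrightarrow>
     7 * (card M + card N) \<le> 2 * (card (ss M M) + card (ss N (dil q M) \<union> ss M N)
        + card (ss N (dil q N))) + 12"
  using L3_aux by blast


lemma card_layer: "card (bs_layer m A) = card A"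
proof -
  have "bs_layer m A = Pair m ` A" unfolding bs_layer_def by auto
  then show ?thesis by (simp add: card_image inj_on_def)
qed

lemma finite_layer: "finite A \<Longrightarrow> finite (bs_layer m A)"
  unfolding bs_layer_def by simp

lemma layer_Un: "bs_layer m A \<union> bs_layer m B = bs_layer m (A \<union> B)"
  unfolding bs_layer_def by auto

lemma layer_disj: "m \<noteq> n \<Longrightarrow> bs_layer m A \<inter> bs_layer n B = {}"
  unfolding bs_layer_def by auto

lemma finite_square: "finite S \<Longrightarrow> finite (bs_square S)"
proof -
  assume "finite S"
  moreover have "bs_square S = (\<lambda>(s,t). bs_mult s t) ` (S \<times> S)" unfolding bs_square_def by auto
  ultimately show ?thesis by simp
qed

lemma mem_layer: "p \<in> bs_layer k X \<Longrightarrow> \<exists>z\<in>X. p = (k, z)"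
  unfolding bs_layer_def by blast

lemma mem_ssdil: "z \<in> ss A (dil c B) \<Longrightarrow> \<exists>a\<in>A. \<exists>x\<in>B. z = a + c * x"
  unfolding ss_def dil_def by blast

lemma sq_mem:
  assumes "s \<in> S" "t \<in> S" "bs_mult s t = p" shows "p \<in> bs_square S"
  using assms unfolding bs_square_def by blast

lemma square_sub:
  fixes m n :: nat and M N :: "int set"
  shows "bs_layer (m+m) (ss M (dil (3^m) M)) \<union>
         bs_layer (m+n) (ss N (dil (3^n) M) \<union> ss M (dil (3^m) N)) \<union>
         bs_layer (n+n) (ss N (dil (3^n) N)) \<subseteq> bs_square (bs_layer m M \<union> bs_layer n N)"
proof -
  define S where "S = bs_layer m M \<union> bs_layer n N"
  have inM: "(m,x) \<in> S" if "x \<in> M" for x using that unfolding S_def bs_layer_def by blast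
  have inN: "(n,x) \<in> S" if "x \<in> N" for x using that unfolding S_def bs_layer_def by blast
  have 1: "bs_layer (m+m) (ss M (dil (3^m) M)) \<subseteq> bs_square S"
  proof
    fix p assume "p \<in> bs_layer (m+m) (ss M (dil (3^m) M))"
    then obtain z where z: "z \<in> ss M (dil (3^m) M)" "p = (m+m, z)" using mem_layer by blast
    then obtain a x where ax: "a \<in> M" "x \<in> M" "z = a + 3^m * x" using mem_ssdil by blast
    show "p \<in> bs_square S" by (rule sq_mem[OF inM[OF ax(2)] inM[OF ax(1)]]) (simp add: bs_mult_def z ax)
  qed
  have 2: "bs_layer (m+n) (ss N (dil (3^n) M)) \<subseteq> bs_square S"
  proof
    fix p assume "p \<in> bs_layer (m+n) (ss N (dil (3^n) M))"
    then obtain z where z: "z \<in> ss N (dil (3^n) M)" "p = (m+n, z)" using mem_layer by blast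
    then obtain a x where ax: "a \<in> N" "x \<in> M" "z = a + 3^n * x" using mem_ssdil by blast
    show "p \<in> bs_square S" by (rule sq_mem[OF inM[OF ax(2)] inN[OF ax(1)]]) (simp add: bs_mult_def z ax)
  qed
  have 3: "bs_layer (m+n) (ss M (dil (3^m) N)) \<subseteq> bs_square S"
  proof
    fix p assume "p \<in> bs_layer (m+n) (ss M (dil (3^m) N))"
    then obtain z where z: "z \<in> ss M (dil (3^m) N)" "p = (m+n, z)" using mem_layer by blast
    then obtain a x where ax: "a \<in> M" "x \<in> N" "z = a + 3^m * x" using mem_ssdil by blast
    show "p \<in> bs_square S" by (rule sq_mem[OF inN[OF ax(2)] inM[OF ax(1)]]) (simp add: bs_mult_def z ax add.commute)
  qed
  have 4: "bs_layer (n+n) (ss N (dil (3^n) N)) \<subseteq> bs_square S"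
  proof
    fix p assume "p \<in> bs_layer (n+n) (ss N (dil (3^n) N))"
    then obtain z where z: "z \<in> ss N (dil (3^n) N)" "p = (n+n, z)" using mem_layer by blast
    then obtain a x where ax: "a \<in> N" "x \<in> N" "z = a + 3^n * x" using mem_ssdil by blast
    show "p \<in> bs_square S" by (rule sq_mem[OF inN[OF ax(2)] inN[OF ax(1)]]) (simp add: bs_mult_def z ax)
  qed
  have "bs_layer (m+n) (ss N (dil (3^n) M) \<union> ss M (dil (3^m) N)) =
     bs_layer (m+n) (ss N (dil (3^n) M)) \<union> bs_layer (m+n) (ss M (dil (3^m) N))"
    by (simp add: layer_Un)
  then show ?thesis using 1 2 3 4 unfolding S_def by auto
qed

theorem lemma2p1:
  fixes m n :: nat and M N :: "int set"
  assumes "m < n"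
    and "finite M" and "M \<noteq> {}" and "finite N" and "N \<noteq> {}"
    and "card (bs_layer m M \<union> bs_layer n N) \<ge> 4"
  shows "real (card (bs_square (bs_layer m M \<union> bs_layer n N)))
           \<ge> 7 / 2 * real (card (bs_layer m M \<union> bs_layer n N)) - 6"
proof -
  define S where "S = bs_layer m M \<union> bs_layer n N"
  define A where "A = card (ss M (dil (3^m) M))"
  define T where "T = card (ss N (dil (3^n) M) \<union> ss M (dil (3^m) N))"
  define C where "C = card (ss N (dil (3^n) N))"
  have fS: "finite S" using assms S_def by (simp add: finite_layer)
  have cS: "card S = card M + card N"
    unfolding S_def using assms
    by (simp add: card_Un_disjoint finite_layer layer_disj card_layer)
  have f1: "finite (ss M (dil (3^m) M))" "finite (ss N (dil (3^n) M) \<union> ss M (dil (3^m) N))"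
    "finite (ss N (dil (3^n) N))" using assms by (auto simp: finite_ss finite_dil)
  have "card (bs_layer (m+m) (ss M (dil (3^m) M)) \<union>
         bs_layer (m+n) (ss N (dil (3^n) M) \<union> ss M (dil (3^m) N)) \<union>
         bs_layer (n+n) (ss N (dil (3^n) N))) = A + T + C"
    unfolding A_def T_def C_def using f1 assms(1)
    by (simp add: card_Un_disjoint finite_layer layer_disj card_layer Int_Un_distrib2)
  moreover have sub: "bs_layer (m+m) (ss M (dil (3^m) M)) \<union>
         bs_layer (m+n) (ss N (dil (3^n) M) \<union> ss M (dil (3^m) N)) \<union>
         bs_layer (n+n) (ss N (dil (3^n) N)) \<subseteq> bs_square S"
    using square_sub S_def by simp
  ultimately have sq: "A + T + C \<le> card (bs_square S)"
    using card_mono[OF finite_square[OF fS] sub] by simp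
  have key: "7 * (card M + card N) \<le> 2 * (A + T + C) + 12"
  proof (cases "m = 0")
    case True
    have q: "(3::int)^n \<ge> 2"
    proof -
      have "(3::int)^1 \<le> 3^n" using assms(1) by (intro power_increasing) auto
      then show ?thesis by simp
    qed
    show ?thesis using L3[OF q assms(2-5)] True unfolding A_def T_def C_def
      by (simp add: Un_commute)
  next
    case False
    have q1: "(3::int)^m \<ge> 2"
    proof -
      have "(3::int)^1 \<le> 3^m" using False by (intro power_increasing) auto
      then show ?thesis by simp
    qed
    have q2: "(3::int)^n \<ge> 2"
    proof -
      have "(3::int)^1 \<le> 3^n" using assms(1) by (intro power_increasing) auto
      then show ?thesis by simp
    qed
    have hA: "3 * card M \<le> A + 2" using L2[OF q1 assms(2,3)] A_def by simp
    have hC: "3 * card N \<le> C + 2" using L2[OF q2 assms(4,5)] C_def by simp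
    have "card N + card M \<le> card (ss N (dil (3^n) M)) + 1"
      using card_ss[OF assms(4,5) finite_dil[OF assms(2), where q="3^n"] dil_ne[OF assms(3), where q="3^n"]] card_dil[of "3^n" M] by simp
    moreover have "card (ss N (dil (3^n) M)) \<le> T" unfolding T_def by (rule card_mono[OF f1(2)]) auto
    ultimately show ?thesis using hA hC unfolding distrib_left by linarith
  qed
  have "7 * (card M + card N) \<le> 2 * card (bs_square S) + 12"
    using key sq unfolding distrib_left by linarith
  then have "real (7 * (card M + card N)) \<le> real (2 * card (bs_square S) + 12)"
    by (rule of_nat_mono)
  then have h: "7 * real (card M) + 7 * real (card N) \<le> 2 * real (card (bs_square S)) + 12" by simp
  have h2: "real (card M + card N) = real (card M) + real (card N)" by simp
  show ?thesis unfolding S_def[symmetric] cS h2 distrib_left using h by linarith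
qed

end
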